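(* Let $U$ be a nonempty open subset of $\mathbb{R}^n$, let $L>0$, and let $g:\mathbb{R}^n\to\mathbb{R}$ be differentiable on $U$ and satisfy $0\le g(y)-g(x)-\langle\nabla g(x),y-x\rangle\le L\|y-x\|^2$ for all $y\in\mathbb{R}^n$ and all $x\in U$. Then $(2L)^{-1}\nabla g$ is firmly nonexpansive on $U$, i.e. $(2L)^{-1}\|\nabla g(y)-\nabla g(x)\|^2\le\langle\nabla g(x)-\nabla g(y),x-y\rangle$ for all $x,y\in U$. *)

theory Defs
  imports "HOL-Analysis.Analysis"
begin

end

theory Submission
  imports Defs
begin

lemma key:
  fixes U :: "(real ^ 'n) set" and L :: real
    and g :: "real ^ 'n \<Rightarrow> real" and G :: "real ^ 'n \<Rightarrow> real ^ 'n"
  assumes "L > 0"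
    and bounds: "\<And>x y. x \<in> U \<Longrightarrow>
        0 \<le> g y - g x - G x \<bullet> (y - x) \<and> g y - g x - G x \<bullet> (y - x) \<le> L * (norm (y - x))\<^sup>2"
    and xU: "x \<in> U" and yU: "y \<in> U"
  shows "(norm (G y - G x))\<^sup>2 / (4 * L) \<le> g y - g x - G x \<bullet> (y - x)"
proof -
  define c where "c = 1 / (2 * L)"
  define d where "d = G y - G x"
  define z where "z = y - c *\<^sub>R d"
  have A: "0 \<le> g z - g x - G x \<bullet> (z - x)" using bounds[OF xU] by blast
  have B: "g z - g y - G y \<bullet> (z - y) \<le> L * (norm (z - y))\<^sup>2" using bounds[OF yU] by blast
  have zy: "z - y = - (c *\<^sub>R d)" by (simp add: z_def)
  have zx: "z - x = (y - x) - c *\<^sub>R d" by (simp add: z_def algebra_simps)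
  have n: "(norm (z - y))\<^sup>2 = c^2 * (norm d)\<^sup>2" by (simp add: zy power_mult_distrib)
  have i1: "G y \<bullet> (z - y) = - c * (G y \<bullet> d)" by (simp add: zy)
  have i2: "G x \<bullet> (z - x) = G x \<bullet> (y - x) - c * (G x \<bullet> d)" by (simp add: zx inner_diff_right)
  have dd: "G y \<bullet> d - G x \<bullet> d = (norm d)\<^sup>2" by (simp add: d_def inner_diff_left power2_norm_eq_inner)
  have "0 \<le> g y - g x - G x \<bullet> (y - x) - c * (G y \<bullet> d - G x \<bullet> d) + L * (c^2 * (norm d)\<^sup>2)"
    using A B n i1 i2 by (simp add: algebra_simps)
  hence "0 \<le> g y - g x - G x \<bullet> (y - x) - c * (norm d)\<^sup>2 + L * (c^2 * (norm d)\<^sup>2)" by (simp add: dd)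
  moreover have "L * (c^2 * (norm d)\<^sup>2) = (norm d)\<^sup>2 / (4 * L)" "c * (norm d)\<^sup>2 = (norm d)\<^sup>2 / (2 * L)"
    using assms(1) by (simp_all add: c_def power2_eq_square field_simps)
  ultimately show ?thesis by (simp add: d_def)
qed

theorem mainTheorem14:
  fixes U :: "(real ^ 'n) set" and L :: real
    and g :: "real ^ 'n \<Rightarrow> real" and G :: "real ^ 'n \<Rightarrow> real ^ 'n"
  assumes "open U" and "U \<noteq> {}" and "L > 0"
    and grad: "\<And>x. x \<in> U \<Longrightarrow> (g has_derivative (\<lambda>h. G x \<bullet> h)) (at x)"
    and bounds: "\<And>x y. x \<in> U \<Longrightarrow>
        0 \<le> g y - g x - G x \<bullet> (y - x) \<and> g y - g x - G x \<bullet> (y - x) \<le> L * (norm (y - x))\<^sup>2"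
  shows "\<forall>x\<in>U. \<forall>y\<in>U. (1 / (2 * L)) * (norm (G y - G x))\<^sup>2 \<le> (G x - G y) \<bullet> (x - y)"
proof (intro ballI)
  fix x y assume xU: "x \<in> U" and yU: "y \<in> U"
  have 1: "(norm (G y - G x))\<^sup>2 / (4 * L) \<le> g y - g x - G x \<bullet> (y - x)"
    using key[OF assms(3) bounds xU yU] .
  have 2: "(norm (G x - G y))\<^sup>2 / (4 * L) \<le> g x - g y - G y \<bullet> (x - y)"
    using key[OF assms(3) bounds yU xU] .
  have nn: "norm (G x - G y) = norm (G y - G x)" by (rule norm_minus_commute)
  have e: "(G x - G y) \<bullet> (x - y) = - (G x \<bullet> (y - x)) - G y \<bullet> (x - y)"
    by (simp add: inner_diff_left inner_diff_right algebra_simps)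
  have "(1 / (2 * L)) * (norm (G y - G x))\<^sup>2 = (norm (G y - G x))\<^sup>2 / (4 * L) + (norm (G x - G y))\<^sup>2 / (4 * L)"
    using assms(3) nn by (simp add: field_simps)
  also have "\<dots> \<le> (G x - G y) \<bullet> (x - y)" using 1 2 e by linarith
  finally show "(1 / (2 * L)) * (norm (G y - G x))\<^sup>2 \<le> (G x - G y) \<bullet> (x - y)" .
qed

end
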